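(* In the binary random graph affiliation mixture model with $Q\ge 1$ groups, uniform group priors $\pi_q=1/Q$, and $\alpha\ne\beta$, let $m_1=\mathbb E(X_{12})$, $m_{31}=\mathbb E(X_{12}X_{13}X_{23})$, $m_{41}=\mathbb E(X_{12}X_{23}X_{34}X_{14})$. Then $m_{41}\neq m_1^4$ when $Q\ge2$, and for every $Q\ge2$ $$Q=\frac{-m_{31}^4-m_{41}^3-3m_{41}m_1^8+3m_{41}^2m_1^4-6m_1^6m_{31}^2+4m_1^9m_{31}+4m_1^3m_{31}^3}{(m_1^4-m_{41})^3}.$$
   Context: Random graph mixture model: nodes have i.i.d. latent groups $Z_i\in\{1,\dots,Q\}$ with $\pi_q=\mathbb P(Z_i=q)$; edge variables $X_{ij}$ ($i<j$) are conditionally independent given all $Z$'s, with law of $X_{ij}$ depending only on $(Z_i,Z_j)$. Binary affiliation model: $X_{ij}\in\{0,1\}$ with $\mathbb P(X_{ij}=1\mid Z_i=q,Z_j=l)=\alpha$ if $q=l$ and $=\beta$ if $q\ne l$. *)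

theory Defs
  imports "HOL-Probability.Probability"
begin

text \<open>The pmf is over the edge-indicator function x :: nat * nat => bool
  (x (i,j) = X_ij for 1 <= i < j <= n).\<close>

definition node_pairs :: "nat \<Rightarrow> (nat \<times> nat) set" where
  "node_pairs n = {(i, j). 1 \<le> i \<and> i < j \<and> j \<le> n}"

definition latent_groups :: "nat \<Rightarrow> nat \<Rightarrow> (nat \<Rightarrow> nat) pmf" where
  "latent_groups n Q = Pi_pmf {1..n} 0 (\<lambda>_. pmf_of_set {1..Q})"

definition affiliation_graph :: "nat \<Rightarrow> nat \<Rightarrow> real \<Rightarrow> real \<Rightarrow> (nat \<times> nat \<Rightarrow> bool) pmf" where
  "affiliation_graph n Q \<alpha> \<beta> =
     bind_pmf (latent_groups n Q) (\<lambda>z.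
       Pi_pmf (node_pairs n) False
         (\<lambda>(i, j). bernoulli_pmf (if z i = z j then \<alpha> else \<beta>)))"

definition edge_moment :: "nat \<Rightarrow> nat \<Rightarrow> real \<Rightarrow> real \<Rightarrow> (nat \<times> nat) list \<Rightarrow> real" where
  "edge_moment n Q \<alpha> \<beta> E =
     measure_pmf.expectation (affiliation_graph n Q \<alpha> \<beta>)
       (\<lambda>x. \<Prod>e\<leftarrow>E. (if x e then 1 else 0))"

end

theory Submission
  imports Defs
begin

lemma exp_bind_fin:
  fixes h :: "'b \<Rightarrow> real"
  assumes "finite (set_pmf p)" "\<And>x. x \<in> set_pmf p \<Longrightarrow> finite (set_pmf (f x))"
  shows "measure_pmf.expectation (bind_pmf p f) h =
         measure_pmf.expectation p (\<lambda>x. measure_pmf.expectation (f x) h)"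
proof -
  have "measure_pmf.expectation p (\<lambda>x. measure_pmf.expectation (f x) h) =
     (\<Sum>a\<in>set_pmf p. pmf p a *\<^sub>R measure_pmf.expectation (f a) h)"
    by (rule integral_measure_pmf) (use assms in auto)
  then show ?thesis using assms by (simp add: pmf_expectation_bind[of "set_pmf p"])
qed

lemma fin_Pi: "finite A \<Longrightarrow> (\<And>x. x \<in> A \<Longrightarrow> finite (set_pmf (p x))) \<Longrightarrow> finite (set_pmf (Pi_pmf A dflt p))"
  by (simp add: set_Pi_pmf finite_PiE_dflt)

lemma exp_Pi_insert:
  fixes h :: "_ \<Rightarrow> real"
  assumes "finite A" "x \<notin> A" "\<And>i. finite (set_pmf (p i))"
  shows "measure_pmf.expectation (Pi_pmf (insert x A) dflt p) h =
   measure_pmf.expectation (p x) (\<lambda>y. measure_pmf.expectation (Pi_pmf A dflt p) (\<lambda>f. h (f(x:=y))))"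
  using assms by (simp add: Pi_pmf_insert' exp_bind_fin fin_Pi)

lemma fin_node_pairs: "finite (node_pairs n)"
proof -
  have "node_pairs n \<subseteq> {1..n} \<times> {1..n}" by (auto simp: node_pairs_def)
  then show ?thesis by (rule finite_subset) auto
qed

lemma inner_exp:
  assumes "distinct E" "set E \<subseteq> node_pairs n" "\<And>e. 0 \<le> r e" "\<And>e. r e \<le> 1"
  shows "measure_pmf.expectation (Pi_pmf (node_pairs n) False (\<lambda>e. bernoulli_pmf (r e)))
           (\<lambda>x. \<Prod>e\<leftarrow>E. (if x e then 1 else 0)) = (\<Prod>e\<leftarrow>E. r e)"
proof -
  let ?f = "\<lambda>e v. if e \<in> set E then (if v then 1 else 0) else (1::real)"
  have eq: "(\<Prod>e\<leftarrow>E. (if x e then 1 else 0)) = (\<Prod>e\<in>node_pairs n. ?f e (x e))" for x :: "nat\<times>nat \<Rightarrow> bool"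
  proof -
    have "(\<Prod>e\<leftarrow>E. (if x e then 1 else 0)) = (\<Prod>e\<in>set E. (if x e then 1 else (0::real)))"
      using assms(1) by (simp add: prod.distinct_set_conv_list)
    also have "\<dots> = (\<Prod>e\<in>node_pairs n \<inter> set E. (if x e then 1 else (0::real)))"
      using assms(2) by (simp add: Int_absorb1)
    also have "\<dots> = (\<Prod>e\<in>node_pairs n. ?f e (x e))"
      by (subst prod.inter_restrict[OF fin_node_pairs]) simp
    finally show ?thesis .
  qed
  have "measure_pmf.expectation (Pi_pmf (node_pairs n) False (\<lambda>e. bernoulli_pmf (r e)))
           (\<lambda>x. \<Prod>e\<leftarrow>E. (if x e then 1 else 0)) =
        measure_pmf.expectation (Pi_pmf (node_pairs n) False (\<lambda>e. bernoulli_pmf (r e)))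
           (\<lambda>x. \<Prod>e\<in>node_pairs n. ?f e (x e))" by (simp only: eq)
  also have "\<dots> = (\<Prod>e\<in>node_pairs n. measure_pmf.expectation (bernoulli_pmf (r e)) (?f e))"
    by (rule expectation_prod_Pi_pmf[OF fin_node_pairs])
       (auto intro!: integrable_measure_pmf_finite)
  also have "\<dots> = (\<Prod>e\<in>node_pairs n. if e \<in> set E then r e else 1)"
    using assms(3,4) by (intro prod.cong refl) auto
  also have "\<dots> = (\<Prod>e\<in>set E. r e)"
    using assms(2) by (subst prod.inter_restrict[OF fin_node_pairs, symmetric]) (simp add: Int_absorb1)
  also have "\<dots> = (\<Prod>e\<leftarrow>E. r e)"
    using assms(1) by (simp add: prod.distinct_set_conv_list)
  finally show ?thesis .
qed

lemma fin_bool_pmf: "finite (set_pmf (p :: bool pmf))"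
  by (rule finite_subset[of _ UNIV]) auto

lemma moment_latent:
  assumes "Q \<ge> 1" "0 \<le> \<alpha>" "\<alpha> \<le> 1" "0 \<le> \<beta>" "\<beta> \<le> 1"
    "distinct E" "set E \<subseteq> node_pairs n"
  shows "edge_moment n Q \<alpha> \<beta> E = measure_pmf.expectation (latent_groups n Q)
     (\<lambda>z. \<Prod>e\<leftarrow>E. (case e of (i,j) \<Rightarrow> if z i = z j then \<alpha> else \<beta>))"
proof -
  have fl: "finite (set_pmf (latent_groups n Q))"
    unfolding latent_groups_def using assms(1) by (intro fin_Pi) auto
  have rw: "(\<lambda>(i, j). bernoulli_pmf (if z i = z j then \<alpha> else \<beta>)) =
     (\<lambda>e. bernoulli_pmf (case e of (i,j) \<Rightarrow> if z i = z j then \<alpha> else \<beta>))" for z :: "nat \<Rightarrow> nat"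
    by (auto simp: fun_eq_iff)
  show ?thesis
    unfolding edge_moment_def affiliation_graph_def
    apply (subst exp_bind_fin[OF fl])
     apply (simp add: fin_Pi fin_node_pairs fin_bool_pmf)
    apply (rule Bochner_Integration.integral_cong[OF refl])
    apply (simp only: rw)
    apply (rule inner_exp)
    using assms by (auto split: prod.splits)
qed

lemma latent_reduce:
  fixes h :: "(nat \<Rightarrow> nat) \<Rightarrow> real"
  assumes "n \<ge> 4" "\<And>z. h z = h (\<lambda>x. if x \<in> {1..4} then z x else 0)"
  shows "measure_pmf.expectation (latent_groups n Q) h =
         measure_pmf.expectation (Pi_pmf {1..4} 0 (\<lambda>_. pmf_of_set {1..Q})) h"
proof -
  have "Pi_pmf {1..4} 0 (\<lambda>_. pmf_of_set {1..Q}) =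
     map_pmf (\<lambda>f x. if x \<in> {1..4} then f x else 0) (latent_groups n Q)"
    unfolding latent_groups_def using assms(1) by (intro Pi_pmf_subset) auto
  then show ?thesis using assms(2) by simp
qed

lemma exp_Pi4:
  fixes h :: "(nat \<Rightarrow> nat) \<Rightarrow> real"
  assumes "finite (set_pmf p)"
  shows "measure_pmf.expectation (Pi_pmf {1..4} 0 (\<lambda>_. p)) h =
    measure_pmf.expectation p (\<lambda>a. measure_pmf.expectation p (\<lambda>b.
    measure_pmf.expectation p (\<lambda>c. measure_pmf.expectation p (\<lambda>e.
      h ((\<lambda>_. 0)(4 := e, 3 := c, 2 := b, 1 := a))))))"
proof -
  have "{1..4::nat} = insert 1 (insert 2 (insert 3 (insert 4 {})))" by auto
  then show ?thesis using assms by (simp add: exp_Pi_insert)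
qed

lemma KK:
  fixes x1 y1 x2 y2 :: real
  assumes "finite S" "a \<in> S" "c \<in> S"
  shows "(\<Sum>e\<in>S. (if c = e then x1 else y1) * (if a = e then x2 else y2)) =
    (if a = c then card S*y1*y2 + y1*(x2-y2) + (x1-y1)*y2 + (x1-y1)*(x2-y2)
     else card S*y1*y2 + y1*(x2-y2) + (x1-y1)*y2)"
proof -
  have "(\<Sum>e\<in>S. (if c = e then x1 else y1) * (if a = e then x2 else y2)) =
     (\<Sum>e\<in>S. y1*y2 + (if a = e then y1*(x2-y2) else 0) + (if c = e then (x1-y1)*y2 else 0)
        + (if c = e then (if a = e then (x1-y1)*(x2-y2) else 0) else 0))"
    by (intro sum.cong refl) (auto simp: algebra_simps)
  also have "\<dots> = card S*y1*y2 + y1*(x2-y2) + (x1-y1)*y2 + (if a = c then (x1-y1)*(x2-y2) else 0)"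
    using assms by (simp add: sum.distrib)
  finally show ?thesis by simp
qed

lemma K0:
  fixes x y :: real
  assumes "finite S" "a \<in> S"
  shows "(\<Sum>e\<in>S. (if a = e then x else y)) = card S*y + (x - y)"
proof -
  have "(\<Sum>e\<in>S. (if a = e then x else y)) = (\<Sum>e\<in>S. y + (if a = e then x - y else 0))"
    by (intro sum.cong refl) auto
  also have "\<dots> = card S*y + (x - y)" using assms by (simp add: sum.distrib)
  finally show ?thesis .
qed

lemma KK2:
  fixes x1 y1 x2 y2 :: real
  assumes "finite S" "a \<in> S" "c \<in> S"
  shows "(\<Sum>e\<in>S. (if c = e then x1 else y1) * (if e = a then x2 else y2)) =
    (if a = c then card S*y1*y2 + y1*(x2-y2) + (x1-y1)*y2 + (x1-y1)*(x2-y2)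
     else card S*y1*y2 + y1*(x2-y2) + (x1-y1)*y2)"
  using KK[OF assms, of x1 y1 x2 y2] by (simp add: eq_commute[of _ a])

lemma prep:
  assumes "Q \<ge> 1" "n \<ge> 4" "0 \<le> \<alpha>" "\<alpha> \<le> 1" "0 \<le> \<beta>" "\<beta> \<le> 1"
  shows "edge_moment n Q \<alpha> \<beta> [(1,2)] = \<beta> + (\<alpha> - \<beta>) / Q"
    "edge_moment n Q \<alpha> \<beta> [(1,2), (1,3), (2,3)] = (\<beta> + (\<alpha> - \<beta>) / Q)^3 + (real Q - 1) * (\<alpha> - \<beta>)^3 / Q^3"
    "edge_moment n Q \<alpha> \<beta> [(1,2), (2,3), (3,4), (1,4)] = (\<beta> + (\<alpha> - \<beta>) / Q)^4 + (real Q - 1) * (\<alpha> - \<beta>)^4 / Q^4"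
proof -
  have Q: "real Q \<noteq> 0" using assms(1) by simp
  show "edge_moment n Q \<alpha> \<beta> [(1,2)] = \<beta> + (\<alpha> - \<beta>) / Q"
    using assms
    apply (subst moment_latent)
    apply (simp_all add: node_pairs_def)
    apply (subst latent_reduce, assumption)
    apply simp
    apply (subst exp_Pi4)
    apply simp
    apply (simp add: integral_pmf_of_set KK K0)
    using Q by (simp add: field_simps)
  show "edge_moment n Q \<alpha> \<beta> [(1,2), (1,3), (2,3)] = (\<beta> + (\<alpha> - \<beta>) / Q)^3 + (real Q - 1) * (\<alpha> - \<beta>)^3 / Q^3"
    using assms
    apply (subst moment_latent)
    apply (simp_all add: node_pairs_def)
    apply (subst latent_reduce, assumption)
    apply simp
    apply (subst exp_Pi4)
    apply simp
    apply (simp add: integral_pmf_of_set KK KK2 K0)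
    using Q by (simp add: field_simps) algebra
  show "edge_moment n Q \<alpha> \<beta> [(1,2), (2,3), (3,4), (1,4)] = (\<beta> + (\<alpha> - \<beta>) / Q)^4 + (real Q - 1) * (\<alpha> - \<beta>)^4 / Q^4"
    using assms
    apply (subst moment_latent)
    apply (simp_all add: node_pairs_def)
    apply (subst latent_reduce, assumption)
    apply simp
    apply (subst exp_Pi4)
    apply simp
    apply (simp add: integral_pmf_of_set KK K0)
    using Q by (simp add: field_simps) algebra
qed

theorem proposition4:
  fixes n Q :: nat and \<alpha> \<beta> m1 m31 m41 :: real
  assumes "n \<ge> 4" and "Q \<ge> 1"
    and "0 \<le> \<alpha>" "\<alpha> \<le> 1" "0 \<le> \<beta>" "\<beta> \<le> 1" and "\<alpha> \<noteq> \<beta>"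
    and "m1 = edge_moment n Q \<alpha> \<beta> [(1,2)]"
    and "m31 = edge_moment n Q \<alpha> \<beta> [(1,2), (1,3), (2,3)]"
    and "m41 = edge_moment n Q \<alpha> \<beta> [(1,2), (2,3), (3,4), (1,4)]"
  shows "Q \<ge> 2 \<longrightarrow>
           m41 \<noteq> m1 ^ 4 \<and>
           real Q = (- (m31 ^ 4) - m41 ^ 3 - 3 * m41 * m1 ^ 8 + 3 * m41 ^ 2 * m1 ^ 4
                     - 6 * m1 ^ 6 * m31 ^ 2 + 4 * m1 ^ 9 * m31 + 4 * m1 ^ 3 * m31 ^ 3)
                    / (m1 ^ 4 - m41) ^ 3"
proof
  assume Q2: "Q \<ge> 2"
  define A where "A = (real Q - 1) * (\<alpha> - \<beta>)^3 / Q^3"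
  define B where "B = (real Q - 1) * (\<alpha> - \<beta>)^4 / Q^4"
  have P: "m1 = \<beta> + (\<alpha> - \<beta>) / Q" "m31 = m1^3 + A" "m41 = m1^4 + B"
    using prep[OF assms(2,1,3-6)] assms(8-10) by (simp_all add: A_def B_def)
  have Qr: "real Q \<ge> 2" using Q2 by simp
  have d: "\<alpha> - \<beta> \<noteq> 0" using assms(7) by simp
  have B0: "B \<noteq> 0" unfolding B_def using Qr d by simp
  have N: "- (m31 ^ 4) - m41 ^ 3 - 3 * m41 * m1 ^ 8 + 3 * m41 ^ 2 * m1 ^ 4
                     - 6 * m1 ^ 6 * m31 ^ 2 + 4 * m1 ^ 9 * m31 + 4 * m1 ^ 3 * m31 ^ 3 = - (A^4) - B^3"
    unfolding P(2,3) by algebra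
  have D: "(m1 ^ 4 - m41) ^ 3 = - (B^3)" unfolding P(3) by algebra
  have AB: "A^4 = (real Q - 1) * B^3"
    unfolding A_def B_def using Qr by (simp add: field_simps power_mult_distrib) algebra
  show "m41 \<noteq> m1 ^ 4 \<and> real Q = (- (m31 ^ 4) - m41 ^ 3 - 3 * m41 * m1 ^ 8 + 3 * m41 ^ 2 * m1 ^ 4
                     - 6 * m1 ^ 6 * m31 ^ 2 + 4 * m1 ^ 9 * m31 + 4 * m1 ^ 3 * m31 ^ 3)
                    / (m1 ^ 4 - m41) ^ 3"
    unfolding N D using B0 P(3) AB by (simp add: field_simps)
qed

end
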